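(* There exist positive constants $r_{m,4}$, $c_{m,12}$ and $N_{m,1}\in\mathbb N$ depending only on $m$ such that for every $r\ge r_{m,4}$ and every $n\ge N_{m,1}$, \[P\left(\inf_{t\ge r}L_n(t)<F_m(0)+\frac{F_m(r)-F_m(0)}{4}\right)\le c_{m,12}\,r^{-n\lambda_m/2}.\]
   Context: Fix $m>1/2$ and set $\lambda_m:=\frac12\left(m-\frac12\right)$. Let $c_m:=\left(\int_{\mathbb R}(1+x^2)^{-m}dx\right)^{-1}$ and $\nu_m(dx):=c_m(1+x^2)^{-m}dx$. Let $(X_n)_{n\ge1}$ be i.i.d. random variables on $(\Omega,\mathcal F,P)$ with law $\nu_m$. Let $L_n(t):=\frac1n\sum_{i=1}^n\log(1+(X_i-t)^2)$ and $F_m(t):=\int_{\mathbb R}\log(1+(x-t)^2)\,\nu_m(dx)$ for $t\in\mathbb R$. *)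

theory Defs
  imports "HOL-Probability.Probability"
begin

definition lam :: "real \<Rightarrow> real" where
  "lam m = (1/2) * (m - 1/2)"

definition cnorm :: "real \<Rightarrow> real" where
  "cnorm m = 1 / (\<integral>x. (1 + x\<^sup>2) powr (- m) \<partial>lborel)"

definition nu :: "real \<Rightarrow> real measure" where
  "nu m = density lborel (\<lambda>x. ennreal (cnorm m * (1 + x\<^sup>2) powr (- m)))"

definition Fm :: "real \<Rightarrow> real \<Rightarrow> real" where
  "Fm m t = (\<integral>x. ln (1 + (x - t)\<^sup>2) \<partial>nu m)"

definition Ln :: "(nat \<Rightarrow> 'a \<Rightarrow> real) \<Rightarrow> nat \<Rightarrow> real \<Rightarrow> 'a \<Rightarrow> real" where
  "Ln X n t \<omega> = (1 / real n) * (\<Sum>i=1..n. ln (1 + (X i \<omega> - t)\<^sup>2))"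

end

theory Submission
  imports Defs
begin

lemma cnorm_nonneg: "cnorm m \<ge> 0"
  unfolding cnorm_def by (simp add: integral_nonneg_AE)

lemma half_tail:
  fixes s e :: real assumes "e < -1" "s > 0"
  shows "(\<integral>\<^sup>+x. ennreal (indicator {s..} x * x powr e) \<partial>lborel) = ennreal (- (s powr (e+1) / (e+1)))"
proof -
  have "(\<integral>\<^sup>+x. ennreal (indicator {s..} x * x powr e) \<partial>lborel) = ennreal (-(s powr (e+1)) / (e+1))"
    by (rule nn_integral_has_integral_lebesgue) (use has_integral_powr_to_inf[OF assms] in auto)
  then show ?thesis by simp
qed

lemma half_tail_neg:
  fixes s e :: real assumes "e < -1" "s > 0"
  shows "(\<integral>\<^sup>+x. ennreal (indicator {..-s} x * (-x) powr e) \<partial>lborel) = ennreal (- (s powr (e+1) / (e+1)))"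
proof -
  have "(\<integral>\<^sup>+x. ennreal (indicator {s..} x * x powr e) \<partial>lborel)
     = (\<integral>\<^sup>+x. ennreal (indicator {s..} (- x) * (- x) powr e) \<partial>lborel)"
    by (subst nn_integral_real_affine[where c="-1" and t=0]) auto
  also have "\<dots> = (\<integral>\<^sup>+x. ennreal (indicator {..-s} x * (-x) powr e) \<partial>lborel)"
    by (auto intro!: nn_integral_cong simp: indicator_def)
  finally show ?thesis using half_tail[OF assms] by simp
qed

lemma pw_bound:
  fixes x s m :: real
  assumes m: "m > 1/2" and s: "s > 0"
  shows "(1 + x\<^sup>2) powr (- m) * indicator {x. s < \<bar>x\<bar>} x \<le> indicator {s..} x * x powr (-2*m) + indicator {..-s} x * (-x) powr (-2*m)"
proof (cases "s < \<bar>x\<bar>")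
  case True
  have "(1 + x\<^sup>2) powr (- m) \<le> (x\<^sup>2) powr (-m)"
    using True s m by (intro powr_mono2') auto
  also have "(x\<^sup>2) powr (-m) = \<bar>x\<bar> powr (-2*m)"
  proof -
    have "x\<^sup>2 = \<bar>x\<bar> powr 2" using True s by (simp add: powr_numeral)
    then have "(x\<^sup>2) powr (-m) = (\<bar>x\<bar> powr 2) powr (-m)" by simp
    also have "\<dots> = \<bar>x\<bar> powr (2 * (-m))" by (rule powr_powr)
    finally show ?thesis by simp
  qed
  finally have h: "(1 + x\<^sup>2) powr (- m) \<le> \<bar>x\<bar> powr (-2*m)" .
  show ?thesis
  proof (cases "x > 0")
    case True2: True
    then show ?thesis using True h s by (simp add: indicator_def)
  next
    case False
    then show ?thesis using True h s by (simp add: indicator_def)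
  qed
qed (auto simp: indicator_def)

lemma tail_bound:
  assumes m: "m > 1/2" and s: "s > 0"
  shows "emeasure (nu m) {x. s < \<bar>x\<bar>} \<le> ennreal (2 * cnorm m / (2*m-1) * s powr (1-2*m))"
proof -
  define c where "c = cnorm m"
  have c: "c \<ge> 0" using cnorm_nonneg c_def by simp
  have e: "-2*m < -1" using m by simp
  have "emeasure (nu m) {x. s < \<bar>x\<bar>} = (\<integral>\<^sup>+x. ennreal (c * (1 + x\<^sup>2) powr (- m)) * indicator {x. s < \<bar>x\<bar>} x \<partial>lborel)"
    unfolding nu_def c_def by (subst emeasure_density) auto
  also have "\<dots> \<le> (\<integral>\<^sup>+x. ennreal c * (ennreal (indicator {s..} x * x powr (-2*m)) + ennreal (indicator {..-s} x * (-x) powr (-2*m))) \<partial>lborel)"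
  proof (rule nn_integral_mono)
    fix x :: real
    have "c * ((1 + x\<^sup>2) powr (- m) * indicator {x. s < \<bar>x\<bar>} x) \<le> c * (indicator {s..} x * x powr (-2*m) + indicator {..-s} x * (-x) powr (-2*m))"
      using pw_bound[OF m s, of x] c by (rule mult_left_mono)
    then have "ennreal (c * ((1 + x\<^sup>2) powr (- m) * indicator {x. s < \<bar>x\<bar>} x)) \<le> ennreal (c * (indicator {s..} x * x powr (-2*m) + indicator {..-s} x * (-x) powr (-2*m)))"
      by (rule ennreal_leI)
    moreover have "ennreal (c * ((1 + x\<^sup>2) powr (- m) * indicator {x. s < \<bar>x\<bar>} x)) = ennreal (c * (1 + x\<^sup>2) powr (- m)) * indicator {x. s < \<bar>x\<bar>} x"
      by (simp add: indicator_def)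
    moreover have "ennreal (c * (indicator {s..} x * x powr (-2*m) + indicator {..-s} x * (-x) powr (-2*m))) = ennreal c * (ennreal (indicator {s..} x * x powr (-2*m)) + ennreal (indicator {..-s} x * (-x) powr (-2*m)))"
    proof -
      have a: "0 \<le> indicator {s..} x * x powr (-2*m)" by simp
      have b: "0 \<le> indicator {..-s} x * (-x) powr (-2*m)" by simp
      show ?thesis by (simp only: ennreal_mult[OF c add_nonneg_nonneg[OF a b]] ennreal_plus[OF a b])
    qed
    ultimately show "ennreal (c * (1 + x\<^sup>2) powr (- m)) * indicator {x. s < \<bar>x\<bar>} x \<le> ennreal c * (ennreal (indicator {s..} x * x powr (-2*m)) + ennreal (indicator {..-s} x * (-x) powr (-2*m)))"
      by simp
  qed
  also have "\<dots> = ennreal c * ((\<integral>\<^sup>+x. ennreal (indicator {s..} x * x powr (-2*m)) \<partial>lborel) + (\<integral>\<^sup>+x. ennreal (indicator {..-s} x * (-x) powr (-2*m)) \<partial>lborel))"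
    by (subst nn_integral_cmult) (auto simp: nn_integral_add)
  also have "\<dots> = ennreal c * (ennreal (- (s powr (-2*m+1) / (-2*m+1))) + ennreal (- (s powr (-2*m+1) / (-2*m+1))))"
    using half_tail[OF e s] half_tail_neg[OF e s] by simp
  also have "\<dots> = ennreal (2 * c / (2*m-1) * s powr (1-2*m))"
  proof -
    have p: "- (s powr (-2*m+1) / (-2*m+1)) = s powr (1-2*m) / (2*m-1)" using m
      by (simp add: field_simps)
    have q: "0 \<le> s powr (1-2*m) / (2*m-1)" using m by simp
    show ?thesis unfolding p using c q
      by (simp add: ennreal_mult[symmetric] ennreal_plus[symmetric] del: ennreal_plus) (simp add: field_simps)
  qed
  finally show ?thesis unfolding c_def .
qed

lemma meas_nu: "f \<in> borel_measurable borel \<Longrightarrow> f \<in> borel_measurable (nu m)"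
  by (simp add: nu_def)

lemma ln_ineq:
  fixes x y :: real
  shows "ln (1 + (x - y)\<^sup>2) \<le> ln 2 + ln (1 + y\<^sup>2) + ln (1 + x\<^sup>2)"
proof -
  have "1 + (x - y)\<^sup>2 \<le> 2 * (1 + y\<^sup>2) * (1 + x\<^sup>2)"
  proof -
    have "(x - y)\<^sup>2 \<le> 2*x\<^sup>2 + 2*y\<^sup>2" using zero_le_power2[of "x+y"] by (simp only: power2_diff power2_sum)
    moreover have "0 \<le> x\<^sup>2 * y\<^sup>2" by simp
    moreover have "2 * (1 + y\<^sup>2) * (1 + x\<^sup>2) = 2 + 2*y\<^sup>2 + 2*x\<^sup>2 + 2*(x\<^sup>2 * y\<^sup>2)" by algebra
    ultimately show ?thesis by linarith
  qed
  then have "ln (1 + (x - y)\<^sup>2) \<le> ln (2 * (1 + y\<^sup>2) * (1 + x\<^sup>2))"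
    by (intro ln_mono) (auto intro: add_pos_nonneg)
  also have "\<dots> = ln 2 + ln (1 + y\<^sup>2) + ln (1 + x\<^sup>2)"
  proof -
    have p1: "(0::real) < 1 + y\<^sup>2" "(0::real) < 1 + x\<^sup>2" by (auto intro: add_pos_nonneg)
    have p2: "(0::real) < 2 * (1 + y\<^sup>2)" using p1 by simp
    show ?thesis by (simp only: ln_mult_pos[OF p2 p1(2)] ln_mult_pos[OF _ p1(1)])
  qed
  finally show ?thesis .
qed

lemma ln_ineq2:
  fixes x r :: real
  shows "ln (1 + x\<^sup>2) \<le> ln 2 + ln (1 + r\<^sup>2) + ln (1 + (x - r)\<^sup>2)"
  using ln_ineq[of "x - r" "-r"] by simp

lemma threshold:
  assumes P: "prob_space (nu m)" and r: "r \<ge> 1"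
  shows "Fm m 0 + (Fm m r - Fm m 0) / 4 \<le> \<bar>Fm m 0\<bar> + 1 + ln r / 2"
proof -
  interpret N: prob_space "nu m" by (rule P)
  define K where "K = ln 2 + ln (1 + r\<^sup>2)"
  have K: "K \<le> 2 * ln 2 + 2 * ln r"
  proof -
    have "1 + r\<^sup>2 \<le> 2 * r\<^sup>2" using r mult_mono[of 1 r 1 r] by (simp add: power2_eq_square)
    then have "ln (1 + r\<^sup>2) \<le> ln (2 * r\<^sup>2)" by (intro ln_mono) (auto intro: add_pos_nonneg)
    also have "\<dots> = ln 2 + 2 * ln r" using r by (simp add: ln_mult ln_realpow)
    finally show ?thesis unfolding K_def by simp
  qed
  have ln2: "ln (2::real) \<le> 1" using ln_le_minus_one[of 2] by simp
  have K0: "K \<ge> 0" unfolding K_def by (simp add: add_nonneg_nonneg)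
  have m0[measurable]: "(\<lambda>x. ln (1 + (x - 0)\<^sup>2)) \<in> borel_measurable (nu m)"
    by (intro meas_nu) measurable
  have mr[measurable]: "(\<lambda>x. ln (1 + (x - r)\<^sup>2)) \<in> borel_measurable (nu m)"
    by (intro meas_nu) measurable
  show ?thesis
  proof (cases "integrable (nu m) (\<lambda>x. ln (1 + (x - 0)\<^sup>2))")
    case True
    have intK: "integrable (nu m) (\<lambda>x. K + ln (1 + (x - 0)\<^sup>2))"
      using True by (intro Bochner_Integration.integrable_add) auto
    have intr: "integrable (nu m) (\<lambda>x. ln (1 + (x - r)\<^sup>2))"
      by (rule Bochner_Integration.integrable_bound[OF intK mr])
         (use ln_ineq[of _ r] K0 in \<open>auto simp: K_def intro!: AE_I2 add_nonneg_nonneg\<close>)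
    have "Fm m r \<le> (\<integral>x. K + ln (1 + (x - 0)\<^sup>2) \<partial>nu m)"
      unfolding Fm_def by (rule integral_mono[OF intr intK]) (use ln_ineq[of _ r] in \<open>simp add: K_def\<close>)
    also have "\<dots> = K + Fm m 0"
      unfolding Fm_def using True by (simp add: N.prob_space)
    finally have "Fm m r \<le> K + Fm m 0" .
    then have "Fm m r - Fm m 0 \<le> 2 + 2 * ln r" using K ln2 by linarith
    then have "(Fm m r - Fm m 0) / 4 \<le> 1/2 + ln r / 2" by (simp add: field_simps)
    then show ?thesis using abs_ge_self[of "Fm m 0"] by linarith
  next
    case False
    then have F0: "Fm m 0 = 0" unfolding Fm_def by (simp add: not_integrable_integral_eq)
    have "\<not> integrable (nu m) (\<lambda>x. ln (1 + (x - r)\<^sup>2))"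
    proof
      assume intr: "integrable (nu m) (\<lambda>x. ln (1 + (x - r)\<^sup>2))"
      have intK: "integrable (nu m) (\<lambda>x. K + ln (1 + (x - r)\<^sup>2))"
        using intr by (intro Bochner_Integration.integrable_add) auto
      have "integrable (nu m) (\<lambda>x. ln (1 + (x - 0)\<^sup>2))"
        by (rule Bochner_Integration.integrable_bound[OF intK m0])
           (use ln_ineq2[of _ r] K0 in \<open>auto simp: K_def intro!: AE_I2 add_nonneg_nonneg\<close>)
      then show False using False by simp
    qed
    then have "Fm m r = 0" unfolding Fm_def by (simp add: not_integrable_integral_eq)
    then show ?thesis using F0 r by simp
  qed
qed

lemma many_small:
  fixes X :: "nat \<Rightarrow> 'a \<Rightarrow> real"
  assumes n: "n \<ge> 1" and r: "r \<ge> 2" and t: "t \<ge> r"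
    and cnt: "3 * card {i\<in>{1..n}. r/2 < \<bar>X i \<omega>\<bar>} < 2 * n"
  shows "(2/3) * ln (r/2) \<le> Ln X n t \<omega>"
proof -
  define S where "S = {i\<in>{1..n}. \<bar>X i \<omega>\<bar> \<le> r/2}"
  define G where "G = {i\<in>{1..n}. r/2 < \<bar>X i \<omega>\<bar>}"
  have "card S + card G = card (S \<union> G)"
    by (rule card_Un_disjoint[symmetric]) (auto simp: S_def G_def)
  also have "S \<union> G = {1..n}" by (auto simp: S_def G_def)
  finally have cSG: "card S + card G = n" by simp
  have nS: "real n \<le> 3 * real (card S)" using cSG cnt unfolding G_def[symmetric] by linarith
  define f where "f i = ln (1 + (X i \<omega> - t)\<^sup>2)" for i
  have f0: "0 \<le> f i" for i unfolding f_def by simp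
  have lr: "0 \<le> ln (r/2)" using r by simp
  have fS: "2 * ln (r/2) \<le> f i" if "i \<in> S" for i
  proof -
    have "\<bar>X i \<omega>\<bar> \<le> r/2" using that by (simp add: S_def)
    then have "r/2 \<le> t - X i \<omega>" using t by linarith
    then have "(r/2)^2 \<le> (X i \<omega> - t)\<^sup>2" using r
      by (metis (no_types, opaque_lifting) power2_commute power_mono zero_le_divide_iff zero_le_numeral order.trans less_imp_le order_refl zero_less_numeral dual_order.trans)
    then have "ln ((r/2)^2) \<le> ln (1 + (X i \<omega> - t)\<^sup>2)" using r by (intro ln_mono) auto
    also have "ln ((r/2)^2) = 2 * ln (r/2)" using r by (simp add: ln_realpow)
    finally show ?thesis unfolding f_def .
  qed
  have "real (card S) * (2 * ln (r/2)) = (\<Sum>i\<in>S. 2 * ln (r/2))" by simp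
  also have "\<dots> \<le> (\<Sum>i\<in>S. f i)" by (rule sum_mono) (rule fS)
  also have "\<dots> \<le> (\<Sum>i=1..n. f i)" by (rule sum_mono2) (auto simp: S_def f0)
  finally have sumb: "real (card S) * (2 * ln (r/2)) \<le> (\<Sum>i=1..n. f i)" .
  have "(2/3) * ln (r/2) = (1 / real n) * ((real n / 3) * (2 * ln (r/2)))" using n by simp
  also have "\<dots> \<le> (1 / real n) * (real (card S) * (2 * ln (r/2)))"
    using nS lr by (intro mult_left_mono mult_right_mono) auto
  also have "\<dots> \<le> (1 / real n) * (\<Sum>i=1..n. f i)"
    using sumb by (intro mult_left_mono) auto
  also have "\<dots> = Ln X n t \<omega>" unfolding Ln_def f_def by simp
  finally show ?thesis .
qed

theorem lemma6p2:
  fixes m :: real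
  assumes "m > 1/2"
  shows "\<exists>r4 c12 :: real. \<exists>N1 :: nat. r4 > 0 \<and> c12 > 0 \<and> N1 \<ge> 1 \<and>
    (\<forall>(M :: 'a measure) (X :: nat \<Rightarrow> 'a \<Rightarrow> real).
       prob_space M \<and>
       (\<forall>i\<ge>1. X i \<in> borel_measurable M) \<and>
       prob_space.indep_vars M (\<lambda>_. borel) X {1..} \<and>
       (\<forall>i\<ge>1. distr M borel (X i) = nu m)
       \<longrightarrow> (\<forall>r \<ge> r4. \<forall>n \<ge> N1.
             measure M {\<omega> \<in> space M.
                (INF t\<in>{r..}. Ln X n t \<omega>) < Fm m 0 + (Fm m r - Fm m 0) / 4}
             \<le> c12 * r powr (- (real n * lam m / 2))))"
proof -
  define l where "l = lam m"
  have l0: "l > 0" using assms by (simp add: l_def lam_def)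
  have e4: "1 - 2*m = -(4*l)" by (simp add: l_def lam_def field_simps)
  define D where "D = 2 * cnorm m / (2*m-1) * 2 powr (2*m-1)"
  have D0: "D \<ge> 0" using cnorm_nonneg[of m] assms by (simp add: D_def)
  define B where "B = \<bar>Fm m 0\<bar> + 1"
  define r4 where "r4 = max 2 (max (exp (6*B + 4*ln 2)) ((4*D+1) powr (1/l)))"
  show ?thesis
  proof (rule exI[of _ r4], rule exI[of _ "1::real"], rule exI[of _ "1::nat"], intro conjI allI impI)
    show "r4 > 0" unfolding r4_def by simp
    show "(1::real) > 0" by simp
    show "(1::nat) \<ge> 1" by simp
    fix M :: "'a measure" and X :: "nat \<Rightarrow> 'a \<Rightarrow> real" and r :: real and n :: nat
    assume H: "prob_space M \<and> (\<forall>i\<ge>1. X i \<in> borel_measurable M) \<and>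
       prob_space.indep_vars M (\<lambda>_. borel) X {1..} \<and> (\<forall>i\<ge>1. distr M borel (X i) = nu m)"
      and r: "r \<ge> r4" and n: "n \<ge> 1"
    from H have P: "prob_space M" and meas: "\<And>i. i \<ge> 1 \<Longrightarrow> X i \<in> borel_measurable M"
      and ind: "prob_space.indep_vars M (\<lambda>_. borel) X {1..}"
      and dist: "\<And>i. i \<ge> 1 \<Longrightarrow> distr M borel (X i) = nu m" by auto
    interpret prob_space M by (rule P)
    have Pnu: "prob_space (nu m)" using dist[of 1] prob_space_distr[OF meas[of 1]] by simp
    have r2: "r \<ge> 2" and rexp: "r \<ge> exp (6*B + 4*ln 2)" and rD: "r \<ge> (4*D+1) powr (1/l)"
      using r unfolding r4_def by auto
    have r1: "r \<ge> 1" using r2 by simp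
    define U where "U = {x::real. r/2 < \<bar>x\<bar>}"
    have Ub: "U \<in> sets borel" unfolding U_def by measurable
    define p where "p = measure (nu m) U"
    have p_le: "p \<le> D * r powr (-(4*l))"
    proof -
      have tb: "emeasure (nu m) U \<le> ennreal (2 * cnorm m / (2*m-1) * (r/2) powr (1-2*m))"
        unfolding U_def using assms r2 by (intro tail_bound) simp_all
      have q1: "(r/2) powr (1-2*m) = r powr (1-2*m) / 2 powr (1-2*m)"
        using r2 by (simp add: powr_divide)
      have q2: "(2::real) powr (2*m-1) = inverse (2 powr (1-2*m))"
        using powr_minus[of "2::real" "1-2*m"] by simp
      have "2 * cnorm m / (2*m-1) * (r/2) powr (1-2*m) = D * r powr (-(4*l))"
      proof -
        have q3: "r powr (1-2*m) = r powr (-(4*l))" by (simp only: e4)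
        show ?thesis unfolding q1 D_def q2 q3 by (simp only: divide_inverse mult_ac)
      qed
      then have "emeasure (nu m) U \<le> ennreal (D * r powr (-(4*l)))" using tb by simp
      then show ?thesis unfolding p_def measure_def
        by (rule enn2real_leI[rotated]) (use D0 in simp)
    qed
    define \<epsilon> where "\<epsilon> = 2 powr (-3/2) * r powr (-(3*l/4))"
    have p_eps: "p \<le> \<epsilon>"
    proof -
      have "((4*D+1) powr (1/l)) powr l \<le> r powr l"
        using rD l0 D0 by (intro powr_mono2) auto
      then have rl: "4*D+1 \<le> r powr l" using l0 D0 by (simp add: powr_powr)
      have rlpos: "r powr l > 0" using r1 by simp
      have s1: "r powr (-(4*l)) = r powr (-l) * r powr (-(3*l))"
        by (subst powr_add[symmetric]) simp
      have s2: "r powr (-l) = inverse (r powr l)" by (rule powr_minus)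
      have "D * r powr (-(4*l)) = (D / r powr l) * r powr (-(3*l))"
        unfolding s1 s2 by (simp only: divide_inverse mult_ac)
      also have "D / r powr l \<le> 1/4"
        using rl rlpos D0 by (simp add: divide_le_eq)
      then have "(D / r powr l) * r powr (-(3*l)) \<le> (1/4) * r powr (-(3*l/4))"
        using r1 l0 by (intro mult_mono powr_mono) auto
      also have "(1/4::real) \<le> 2 powr (-3/2)"
      proof -
        have "(2::real) powr (-2) \<le> 2 powr (-3/2)" by (intro powr_mono) auto
        then show ?thesis by (simp add: powr_minus)
      qed
      then have "(1/4) * r powr (-(3*l/4)) \<le> \<epsilon>" unfolding \<epsilon>_def by (intro mult_right_mono) auto
      finally show ?thesis using p_le by linarith
    qed
    have eps0: "\<epsilon> > 0" unfolding \<epsilon>_def using r1 by simp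
    have eps1: "\<epsilon> \<le> 1"
    proof -
      have a: "(2::real) powr (-3/2) \<le> 1"
        using powr_mono[of "-3/2" 0 "2::real"] by simp
      have b: "r powr (-(3*l/4)) \<le> 1"
        using powr_mono[of "-(3*l/4)" 0 r] r1 l0 by simp
      show ?thesis unfolding \<epsilon>_def using a b
        by (intro mult_le_one) auto
    qed
    have p0: "p \<ge> 0" unfolding p_def by simp
    define T where "T = Fm m 0 + (Fm m r - Fm m 0) / 4"
    have T: "T \<le> B + ln r / 2" unfolding T_def B_def using threshold[OF Pnu r1] by simp
    have lnr: "ln r \<ge> 6*B + 4*ln 2" using rexp by (metis exp_gt_zero ln_exp ln_mono)
    define \<K> where "\<K> = {K. K \<subseteq> {1..n} \<and> 2*n \<le> 3 * card K}"
    define A where "A K = (\<Inter>i\<in>K. X i -` U \<inter> space M)" for K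
    have sub: "{\<omega> \<in> space M. (INF t\<in>{r..}. Ln X n t \<omega>) < T} \<subseteq> (\<Union>K\<in>\<K>. A K)"
    proof
      fix \<omega> assume "\<omega> \<in> {\<omega> \<in> space M. (INF t\<in>{r..}. Ln X n t \<omega>) < T}"
      then have om: "\<omega> \<in> space M" and lt: "(INF t\<in>{r..}. Ln X n t \<omega>) < T" by auto
      define K where "K = {i\<in>{1..n}. r/2 < \<bar>X i \<omega>\<bar>}"
      have "2*n \<le> 3 * card K"
      proof (rule ccontr)
        assume "\<not> 2*n \<le> 3 * card K"
        then have c: "3 * card {i\<in>{1..n}. r/2 < \<bar>X i \<omega>\<bar>} < 2 * n" unfolding K_def by simp
        have "(2/3) * ln (r/2) \<le> (INF t\<in>{r..}. Ln X n t \<omega>)"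
          by (rule cINF_greatest) (use many_small[where X=X and \<omega>=\<omega> and n=n and r=r and t=t for t, OF n r2 _ c] in auto)
        moreover have "B + ln r / 2 \<le> (2/3) * ln (r/2)"
          using r2 lnr by (simp add: ln_div algebra_simps)
        ultimately show False using lt T by linarith
      qed
      then have "K \<in> \<K>" unfolding \<K>_def K_def by auto
      moreover have "\<omega> \<in> A K" unfolding A_def K_def U_def using om by auto
      ultimately show "\<omega> \<in> (\<Union>K\<in>\<K>. A K)" by blast
    qed
    have fin: "finite \<K>" unfolding \<K>_def by (rule finite_subset[of _ "Pow {1..n}"]) auto
    have Kne: "K \<noteq> {}" and Kfin: "finite K" and Ksub: "K \<subseteq> {1..}" and Kc: "2*real n \<le> 3 * real (card K)"
      if "K \<in> \<K>" for K
    proof -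
      show "finite K" using that unfolding \<K>_def by (auto intro: finite_subset)
      show "K \<subseteq> {1..}" using that unfolding \<K>_def by auto
      show c: "2*real n \<le> 3 * real (card K)" using that unfolding \<K>_def by (simp flip: of_nat_mult of_nat_le_iff)
      show "K \<noteq> {}" using c n by auto
    qed
    have Xev: "X i -` U \<inter> space M \<in> events" if "i \<ge> 1" for i
      using measurable_sets[OF meas[OF that] Ub] .
    have Aev: "A K \<in> events" if "K \<in> \<K>" for K
      unfolding A_def using Kne[OF that] Kfin[OF that] Ksub[OF that] Xev
      by (intro sets.finite_INT) auto
    have Xp: "prob (X i -` U \<inter> space M) = p" if "i \<ge> 1" for i
      unfolding p_def using measure_distr[OF meas[OF that] Ub] dist[OF that] by simp
    have indS: "indep_sets (\<lambda>i. {X i -` A \<inter> space M | A. A \<in> sets borel}) {1..}"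
      using ind unfolding indep_vars_def2 by simp
    have AK: "prob (A K) \<le> \<epsilon> powr (2 * real n / 3)" if "K \<in> \<K>" for K
    proof -
      have "prob (A K) = (\<Prod>i\<in>K. prob (X i -` U \<inter> space M))"
        unfolding A_def using Kne[OF that] Kfin[OF that] Ksub[OF that] Ub
        by (intro indep_setsD[OF indS]) auto
      also have "\<dots> = p ^ card K" using Ksub[OF that] Xp by (simp add: subset_eq)
      also have "\<dots> \<le> \<epsilon> ^ card K" using p0 p_eps by (intro power_mono) auto
      also have "\<dots> = \<epsilon> powr (real (card K))" using eps0 by (simp add: powr_realpow)
      also have "\<dots> \<le> \<epsilon> powr (2 * real n / 3)"
        using Kc[OF that] eps0 eps1 by (intro powr_mono') auto
      finally show ?thesis .
    qed
    have "measure M {\<omega> \<in> space M. (INF t\<in>{r..}. Ln X n t \<omega>) < T} \<le> measure M (\<Union>K\<in>\<K>. A K)"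
      using sub fin Aev by (intro finite_measure_mono sets.finite_UN) auto
    also have "\<dots> \<le> (\<Sum>K\<in>\<K>. prob (A K))"
      using fin Aev by (intro measure_UNION_le) auto
    also have "\<dots> \<le> (\<Sum>K\<in>\<K>. \<epsilon> powr (2 * real n / 3))"
      using AK by (intro sum_mono) auto
    also have "\<dots> = real (card \<K>) * \<epsilon> powr (2 * real n / 3)" by simp
    also have "\<dots> \<le> 2 ^ n * \<epsilon> powr (2 * real n / 3)"
    proof -
      have "card \<K> \<le> card (Pow {1..n})" unfolding \<K>_def by (rule card_mono) auto
      then have "card \<K> \<le> 2 ^ n" by (simp add: card_Pow)
      then have "real (card \<K>) \<le> 2 ^ n" by (metis of_nat_le_iff of_nat_numeral of_nat_power)
      then show ?thesis by (intro mult_right_mono) auto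
    qed
    also have "\<dots> = r powr (- (real n * l / 2))"
    proof -
      have "\<epsilon> powr (2 * real n / 3) = (2 powr (-3/2)) powr (2 * real n / 3) * (r powr (-(3*l/4))) powr (2 * real n / 3)"
        unfolding \<epsilon>_def using r1 by (simp add: powr_mult)
      also have "\<dots> = 2 powr (- real n) * r powr (- (real n * l / 2))"
        by (simp add: powr_powr mult.commute)
      finally have "\<epsilon> powr (2 * real n / 3) = 2 powr (- real n) * r powr (- (real n * l / 2))" .
      moreover have "(2::real) ^ n * 2 powr (- real n) = 1"
        by (simp add: powr_realpow[symmetric] powr_add[symmetric])
      ultimately show ?thesis by (simp add: mult.assoc[symmetric])
    qed
    finally show "measure M {\<omega> \<in> space M. (INF t\<in>{r..}. Ln X n t \<omega>) < Fm m 0 + (Fm m r - Fm m 0) / 4}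
             \<le> 1 * r powr (- (real n * lam m / 2))" unfolding T_def l_def by simp
  qed
qed

end
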